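(* Suppose the following statement (A) holds: (A) There are absolute constants $t,k_0$ such that for every integer $k\ge k_0$ and every constant $c>0$ there is $n_0$ such that for all $n\ge n_0$, every graph on $n$ vertices with at least $c\,n^{3/2}$ edges contains (as a subgraph) a copy of some graph $H\in\mathcal{H}_{k,t}$. Then the following statement (B) holds: (B) There is an absolute constant $d$ such that for every integer $e\ge 3$ and every constant $c>0$ there is $n_0$ such that for all $n\ge n_0$, every $3$-uniform hypergraph on $n$ vertices with at least $c\,n^2$ hyperedges contains an $(e+d,e)$-configuration.
   Context: A $3$-uniform hypergraph ($3$-graph) is a set of vertices together with a set of $3$-element subsets (hyperedges). An $(v,e)$-configuration in a $3$-graph is a set of $e$ hyperedges whose union has at most $v$ vertices. A graph $H$ is $2$-degenerate if its vertices can be ordered $v_1,\dots,v_k$ so that each $v_i$ has at most $2$ neighbours among $v_1,\dots,v_{i-1}$. For integers $k,t$, $\mathcal{H}_{k,t}$ denotes the family of $2$-degenerate graphs on $k$ vertices with exactly $2k-t$ edges. *)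

theory Defs
  imports Complex_Main
begin

definition graph_on :: "'a set \<Rightarrow> 'a set set \<Rightarrow> bool" where
  "graph_on V E \<longleftrightarrow> (\<forall>e\<in>E. e \<subseteq> V \<and> card e = 2)"

definition two_degenerate :: "'a set \<Rightarrow> 'a set set \<Rightarrow> bool" where
  "two_degenerate V E \<longleftrightarrow>
     (\<exists>\<sigma>. bij_betw \<sigma> {..<card V} V \<and>
        (\<forall>i<card V. card {j. j < i \<and> {\<sigma> i, \<sigma> j} \<in> E} \<le> 2))"

definition H_family :: "nat \<Rightarrow> int \<Rightarrow> nat set set set" where
  "H_family k t = {E. graph_on {..<k} E \<and> two_degenerate {..<k} E \<and>
                      int (card E) = 2 * int k - t}"

definition contains_copy :: "'b set \<Rightarrow> 'b set set \<Rightarrow> 'a set \<Rightarrow> 'a set set \<Rightarrow> bool" where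
  "contains_copy W F V E \<longleftrightarrow>
     (\<exists>f. inj_on f W \<and> f ` W \<subseteq> V \<and> (\<forall>e\<in>F. f ` e \<in> E))"

definition hypergraph3_on :: "'a set \<Rightarrow> 'a set set \<Rightarrow> bool" where
  "hypergraph3_on V E \<longleftrightarrow> (\<forall>e\<in>E. e \<subseteq> V \<and> card e = 3)"

definition has_configuration :: "'a set set \<Rightarrow> nat \<Rightarrow> nat \<Rightarrow> bool" where
  "has_configuration E v e \<longleftrightarrow>
     (\<exists>F\<subseteq>E. card F = e \<and> card (\<Union>F) \<le> v)"

definition statement_A :: bool where
  "statement_A \<longleftrightarrow>
    (\<exists>(t::int) (k0::nat). \<forall>k\<ge>k0. \<forall>c::real>0. \<exists>n0::nat. \<forall>n\<ge>n0.
       \<forall>E::nat set set. graph_on {..<n} E \<and> real (card E) \<ge> c * real n powr (3/2) \<longrightarrow>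
         (\<exists>H\<in>H_family k t. contains_copy {..<k} H {..<n} E))"

definition statement_B :: bool where
  "statement_B \<longleftrightarrow>
    (\<exists>d::nat. \<forall>e::nat\<ge>3. \<forall>c::real>0. \<exists>n0::nat. \<forall>n\<ge>n0.
       \<forall>E::nat set set. hypergraph3_on {..<n} E \<and> real (card E) \<ge> c * (real n)^2 \<longrightarrow>
         has_configuration E (e + d) e)"

end

theory Submission
  imports Defs "HOL-Analysis.Convex"
begin

lemma card3_distinct: "card {p,q,r} = 3 \<Longrightarrow> p \<noteq> q \<and> q \<noteq> r \<and> p \<noteq> r"
  by (auto simp: card_insert_if split: if_splits)

lemma card_Un_diff_count:
  assumes "finite U" "finite C"
  shows "card (U \<union> C) = card U + card (C - U)"
proof -
  have "U \<union> C = U \<union> (C - U)" by blast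
  moreover have "card (U \<union> (C - U)) = card U + card (C - U)"
    by (rule card_Un_disjoint) (use assms in auto)
  ultimately show ?thesis by simp
qed

lemma step1:
  assumes fU: "finite U" and fF: "finite F" and sub: "\<Union>F \<subseteq> U"
    and a1: "a1 \<in> U" and b1: "b1 \<in> U" and ab: "a \<noteq> b"
    and c1: "card {a,a1,x1} = 3" and c2: "card {b,b1,x1} = 3"
  shows "card (U \<union> {a,b,x1}) + card F \<le> card U + card (F \<union> {{a,a1,x1},{b,b1,x1}}) + 1"
proof -
  define D where "D = ({a,x1} - U)"
  define S where "S = {{a,a1,x1},{b,b1,x1}} - F"
  define g where "g c = (if c = a then {a,a1,x1} else {b,b1,x1})" for c
  have "card ({a,b,x1} - U) \<le> card (insert b D)"
    by (rule card_mono) (auto simp: D_def)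
  also have "\<dots> \<le> card D + 1" by (simp add: card_insert_if D_def)
  finally have 1: "card ({a,b,x1} - U) \<le> card D + 1" .
  have ne: "{a,a1,x1} \<noteq> {b,b1,x1}" if "a \<notin> U"
  proof
    assume "{a,a1,x1} = {b,b1,x1}"
    then have "a \<in> {b,b1,x1}" by blast
    then show False using that ab b1 card3_distinct[OF c1] by auto
  qed
  have inj: "inj_on g D"
  proof (rule inj_onI)
    fix c c' assume "c \<in> D" "c' \<in> D" "g c = g c'"
    then show "c = c'" using ne card3_distinct[OF c1] by (auto simp: D_def g_def split: if_splits)
  qed
  have img: "g ` D \<subseteq> S"
  proof
    fix T assume "T \<in> g ` D"
    then obtain c where c: "c \<in> D" "T = g c" by auto
    then have "c \<in> T" "c \<notin> U" by (auto simp: g_def D_def)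
    then have "T \<notin> F" using sub by blast
    then show "T \<in> S" using c by (auto simp: S_def g_def)
  qed
  have "card D \<le> card S"
    using card_inj_on_le[OF inj img] by (simp add: S_def)
  moreover have "card (U \<union> {a,b,x1}) = card U + card ({a,b,x1} - U)"
    using card_Un_diff_count[OF fU, of "{a,b,x1}"] by simp
  moreover have "card (F \<union> {{a,a1,x1},{b,b1,x1}}) = card F + card S"
    using card_Un_diff_count[OF fF, of "{{a,a1,x1},{b,b1,x1}}"] by (simp add: S_def)
  ultimately show ?thesis using 1 by linarith
qed

lemma step2:
  assumes fU: "finite U" and fF: "finite F" and sub: "\<Union>F \<subseteq> U"
    and a1: "a1 \<in> U" and b1: "b1 \<in> U" and a2: "a2 \<in> U" and b2: "b2 \<in> U"
    and ab: "a \<noteq> b" and xx: "x1 \<noteq> x2"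
    and c1: "card {a,a1,x1} = 3" and c2: "card {b,b1,x1} = 3"
    and c3: "card {b,b2,x2} = 3" and c4: "card {a,a2,x2} = 3"
  shows "card (U \<union> {a,b,x1,x2}) + card F \<le> card U + card (F \<union> {{a,a1,x1},{b,b1,x1},{b,b2,x2},{a,a2,x2}})"
proof -
  define D where "D = ({a,b,x1,x2} - U)"
  define S where "S = {{a,a1,x1},{b,b1,x1},{b,b2,x2},{a,a2,x2}} - F"
  define g where "g c = (if c = a then {a,a1,x1} else if c = x1 then {b,b1,x1}
     else if c = b then {b,b2,x2} else {a,a2,x2})" for c
  note d1 = card3_distinct[OF c1] and d2 = card3_distinct[OF c2]
    and d3 = card3_distinct[OF c3] and d4 = card3_distinct[OF c4]
  have n12: "{a,a1,x1} \<noteq> {b,b1,x1}" if "a \<notin> U"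
  proof
    assume "{a,a1,x1} = {b,b1,x1}"
    then have "a \<in> {b,b1,x1}" by blast
    then show False using that ab b1 d1 by auto
  qed
  have n13: "{a,a1,x1} \<noteq> {b,b2,x2}" if "a \<notin> U"
  proof
    assume "{a,a1,x1} = {b,b2,x2}"
    then have "a \<in> {b,b2,x2}" by blast
    then show False using that ab b2 d4 by auto
  qed
  have n14: "{a,a1,x1} \<noteq> {a,a2,x2}" if "x2 \<notin> U"
  proof
    assume "{a,a1,x1} = {a,a2,x2}"
    then have "x2 \<in> {a,a1,x1}" by blast
    then show False using that a1 xx d4 by auto
  qed
  have n23: "{b,b1,x1} \<noteq> {b,b2,x2}" if "x1 \<notin> U"
  proof
    assume "{b,b1,x1} = {b,b2,x2}"
    then have "x1 \<in> {b,b2,x2}" by blast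
    then show False using that b2 xx d2 by auto
  qed
  have n24: "{b,b1,x1} \<noteq> {a,a2,x2}"
  proof
    assume e: "{b,b1,x1} = {a,a2,x2}"
    then have "x1 \<in> {a,a2,x2}" "b \<in> {a,a2,x2}" by blast+
    then show False using ab xx d1 d2 d3 by auto
  qed
  have n34: "{b,b2,x2} \<noteq> {a,a2,x2}" if "b \<notin> U"
  proof
    assume "{b,b2,x2} = {a,a2,x2}"
    then have "b \<in> {a,a2,x2}" by blast
    then show False using that ab a2 d3 by auto
  qed
  have inj: "inj_on g D"
  proof (rule inj_onI)
    fix c c' assume "c \<in> D" "c' \<in> D" "g c = g c'"
    then show "c = c'" using n12 n13 n14 n23 n24 n34 d1 d2 d3 d4 ab xx
      unfolding D_def g_def by (auto split: if_splits)
  qed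
  have img: "g ` D \<subseteq> S"
  proof
    fix T assume "T \<in> g ` D"
    then obtain c where c: "c \<in> D" "T = g c" by auto
    then have "c \<in> T" "c \<notin> U" by (auto simp: g_def D_def)
    then have "T \<notin> F" using sub by blast
    then show "T \<in> S" using c by (auto simp: S_def g_def)
  qed
  have "card D \<le> card S"
    using card_inj_on_le[OF inj img] by (simp add: S_def)
  moreover have "card (U \<union> {a,b,x1,x2}) = card U + card D"
    using card_Un_diff_count[OF fU, of "{a,b,x1,x2}"] by (simp add: D_def)
  moreover have "card (F \<union> {{a,a1,x1},{b,b1,x1},{b,b2,x2},{a,a2,x2}}) = card F + card S"
    using card_Un_diff_count[OF fF, of "{{a,a1,x1},{b,b1,x1},{b,b2,x2},{a,a2,x2}}"] by (simp add: S_def)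
  ultimately show ?thesis by linarith
qed

definition linear3 :: "'a set set \<Rightarrow> bool" where
  "linear3 E \<longleftrightarrow> (\<forall>T1\<in>E. \<forall>T2\<in>E. T1 \<noteq> T2 \<longrightarrow> card (T1 \<inter> T2) \<le> 1)"

lemma linear3_eq:
  assumes "linear3 E" "T1 \<in> E" "T2 \<in> E" "p \<noteq> q" "p \<in> T1" "q \<in> T1" "p \<in> T2" "q \<in> T2"
    and "finite T1"
  shows "T1 = T2"
proof (rule ccontr)
  assume "T1 \<noteq> T2"
  then have "card (T1 \<inter> T2) \<le> 1" using assms unfolding linear3_def by blast
  moreover have "card {p,q} \<le> card (T1 \<inter> T2)"
    by (rule card_mono) (use assms in auto)
  ultimately show False using assms by simp
qed

lemma card_le2_cases:
  assumes "finite A" "card A \<le> 2"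
  shows "A = {} \<or> (\<exists>l. A = {l}) \<or> (\<exists>l1 l2. l1 \<noteq> l2 \<and> A = {l1,l2})"
proof -
  have "card A = 0 \<or> card A = 1 \<or> card A = 2" using assms by linarith
  then show ?thesis using assms by (auto simp: card_1_singleton_iff card_2_iff)
qed

lemma process:
  fixes \<alpha> \<beta> :: "nat \<Rightarrow> 'a" and lab :: "nat \<Rightarrow> nat \<Rightarrow> 'a" and B :: "nat \<Rightarrow> nat set"
  assumes lin: "linear3 E'"
    and card3: "\<forall>T\<in>E'. card T = 3"
    and Bsub: "\<forall>j. B j \<subseteq> {..<j}" and Bc: "\<forall>j<k. card (B j) \<le> 2"
    and P: "\<forall>j<k. \<forall>l\<in>B j. {\<alpha> j, \<alpha> l, lab j l} \<in> E' \<and> {\<beta> j, \<beta> l, lab j l} \<in> E'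
               \<and> {\<alpha> j, \<alpha> l, lab j l} \<noteq> {\<beta> j, \<beta> l, lab j l}"
    and injc: "\<forall>j<k. \<forall>l<k. \<alpha> j = \<alpha> l \<and> \<beta> j = \<beta> l \<longrightarrow> j = l"
  defines "U \<equiv> \<lambda>i. (\<Union>j<i. {\<alpha> j, \<beta> j} \<union> lab j ` B j)"
    and "F \<equiv> \<lambda>i. (\<Union>j<i. \<Union>l\<in>B j. {{\<alpha> j, \<alpha> l, lab j l}, {\<beta> j, \<beta> l, lab j l}})"
  shows "i \<le> k \<Longrightarrow> card (U i) + (\<Sum>j<i. card (B j)) \<le> card (F i) + 2*i"
proof (induction i)
  case 0
  then show ?case by (simp add: U_def F_def)
next
  case (Suc i)
  have ik: "i < k" using Suc.prems by simp
  have finB: "finite (B j)" for j using Bsub finite_subset by blast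
  have fU: "finite (U i)" unfolding U_def using finB by auto
  have fF: "finite (F i)" unfolding F_def using finB by auto
  have sub: "\<Union>(F i) \<subseteq> U i"
  proof
    fix v assume "v \<in> \<Union>(F i)"
    then obtain j l where jl: "j < i" "l \<in> B j" "v \<in> {\<alpha> j, \<alpha> l, lab j l} \<or> v \<in> {\<beta> j, \<beta> l, lab j l}"
      unfolding F_def by blast
    have "l < i" using jl Bsub by force
    then show "v \<in> U i" using jl unfolding U_def by blast
  qed
  have old: "\<alpha> l \<in> U i" "\<beta> l \<in> U i" if "l \<in> B i" for l
    using that Bsub unfolding U_def by blast+
  define a where "a = \<alpha> i"
  define b where "b = \<beta> i"
  have Us: "U (Suc i) = U i \<union> ({a, b} \<union> lab i ` B i)"
    unfolding U_def a_def b_def by (simp add: lessThan_Suc Un_commute)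
  have Fs: "F (Suc i) = F i \<union> (\<Union>l\<in>B i. {{a, \<alpha> l, lab i l}, {b, \<beta> l, lab i l}})"
    unfolding F_def a_def b_def by (simp add: lessThan_Suc Un_commute)
  have ab: "a \<noteq> b" if "l \<in> B i" for l
  proof
    assume "a = b"
    let ?T1 = "{a, \<alpha> l, lab i l}" and ?T2 = "{b, \<beta> l, lab i l}"
    have T: "?T1 \<in> E'" "?T2 \<in> E'" "?T1 \<noteq> ?T2" using P ik that by (auto simp: a_def b_def)
    have "a \<noteq> lab i l" using card3_distinct[of a "\<alpha> l" "lab i l"] card3 T by auto
    then have "?T1 = ?T2" using linear3_eq[OF lin T(1) T(2), of a "lab i l"] \<open>a = b\<close> by auto
    then show False using T by simp
  qed
  have step: "card (U (Suc i)) + card (B i) + card (F i) \<le> card (U i) + card (F (Suc i)) + 2"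
  proof -
    consider "B i = {}" | l where "B i = {l}" | l1 l2 where "l1 \<noteq> l2" "B i = {l1,l2}"
      using card_le2_cases[OF finB Bc[rule_format, OF ik]] by blast
    then show ?thesis
    proof cases
      case 1
      have "card (U i \<union> {a,b}) \<le> card (U i) + card {a,b}" by (rule card_Un_le)
      also have "card {a,b} \<le> 2" by (simp add: card_insert_if)
      finally show ?thesis unfolding Us Fs using 1 by simp
    next
      case (2 l)
      have lB: "l \<in> B i" using 2 by simp
      let ?x = "lab i l"
      have T: "{a, \<alpha> l, ?x} \<in> E'" "{b, \<beta> l, ?x} \<in> E'"
        using P ik lB by (auto simp: a_def b_def)
      have c: "card {a, \<alpha> l, ?x} = 3" "card {b, \<beta> l, ?x} = 3" using T card3 by auto
      have "card (U i \<union> {a,b,?x}) + card (F i) \<le> card (U i) + card (F i \<union> {{a, \<alpha> l, ?x}, {b, \<beta> l, ?x}}) + 1"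
        by (rule step1[OF fU fF sub old[OF lB] ab[OF lB] c])
      moreover have "U (Suc i) = U i \<union> {a,b,?x}" unfolding Us using 2 by auto
      moreover have "F (Suc i) = F i \<union> {{a, \<alpha> l, ?x}, {b, \<beta> l, ?x}}" unfolding Fs using 2 by auto
      ultimately show ?thesis using 2 by simp
    next
      case (3 l1 l2)
      have lB: "l1 \<in> B i" "l2 \<in> B i" using 3 by auto
      let ?x1 = "lab i l1" and ?x2 = "lab i l2"
      have T: "{a, \<alpha> l1, ?x1} \<in> E'" "{b, \<beta> l1, ?x1} \<in> E'"
          "{a, \<alpha> l2, ?x2} \<in> E'" "{b, \<beta> l2, ?x2} \<in> E'"
        using P ik lB by (auto simp: a_def b_def)
      have c: "card {a, \<alpha> l1, ?x1} = 3" "card {b, \<beta> l1, ?x1} = 3"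
          "card {a, \<alpha> l2, ?x2} = 3" "card {b, \<beta> l2, ?x2} = 3" using T card3 by auto
      note d = card3_distinct[OF c(1)] card3_distinct[OF c(2)] card3_distinct[OF c(3)] card3_distinct[OF c(4)]
      have xx: "?x1 \<noteq> ?x2"
      proof
        assume e: "?x1 = ?x2"
        have "{a, \<alpha> l1, ?x1} = {a, \<alpha> l2, ?x2}"
          using linear3_eq[OF lin T(1) T(3), of a ?x1] d e by auto
        then have "\<alpha> l1 = \<alpha> l2" using d e by (metis insert_iff singletonD)
        moreover have "{b, \<beta> l1, ?x1} = {b, \<beta> l2, ?x2}"
          using linear3_eq[OF lin T(2) T(4), of b ?x1] d e by auto
        then have "\<beta> l1 = \<beta> l2" using d e by (metis insert_iff singletonD)
        moreover have "l1 < k" "l2 < k" using lB Bsub ik by force+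
        ultimately have "l1 = l2" using injc by blast
        then show False using 3 by simp
      qed
      have "card (U i \<union> {a,b,?x1,?x2}) + card (F i) \<le> card (U i) +
          card (F i \<union> {{a, \<alpha> l1, ?x1}, {b, \<beta> l1, ?x1}, {b, \<beta> l2, ?x2}, {a, \<alpha> l2, ?x2}})"
        by (rule step2[OF fU fF sub old[OF lB(1)] old[OF lB(2)] ab[OF lB(1)] xx c(1,2,4,3)])
      moreover have "U (Suc i) = U i \<union> {a,b,?x1,?x2}" unfolding Us using 3 by auto
      moreover have "F (Suc i) = F i \<union> {{a, \<alpha> l1, ?x1}, {b, \<beta> l1, ?x1}, {b, \<beta> l2, ?x2}, {a, \<alpha> l2, ?x2}}"
        unfolding Fs using 3 by auto
      ultimately show ?thesis using 3 by (simp add: card_insert_if)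
    qed
  qed
  moreover have "card (U i) + (\<Sum>j<i. card (B j)) \<le> card (F i) + 2*i"
    using Suc.IH Suc.prems by simp
  ultimately show ?case by simp
qed

lemma extract_cfg:
  fixes F :: "nat \<Rightarrow> 'a set set" and U :: "nat \<Rightarrow> 'a set"
  assumes F0: "F 0 = {}" and mono: "\<forall>i<k. F i \<subseteq> F (Suc i)"
    and grow: "\<forall>i<k. card (F (Suc i)) \<le> card (F i) + 4"
    and inv: "\<forall>i\<le>k. finite (U i) \<and> finite (F i) \<and> \<Union>(F i) \<subseteq> U i \<and> card (U i) \<le> card (F i) + t0"
    and ek: "e \<le> card (F k)"
  shows "\<exists>G \<subseteq> F k. card G = e \<and> card (\<Union>G) \<le> e + t0 + 3"
proof -
  have monok: "i \<le> k \<Longrightarrow> F i \<subseteq> F k" for i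
  proof (induction "k - i" arbitrary: i)
    case 0 then show ?case by simp
  next
    case (Suc m)
    then have "F (Suc i) \<subseteq> F k" by simp
    moreover have "F i \<subseteq> F (Suc i)" using mono Suc by simp
    ultimately show ?case by blast
  qed
  have claim: "i \<le> k \<Longrightarrow> e \<le> card (F i) \<Longrightarrow> \<exists>G \<subseteq> F i. card G = e \<and> card (\<Union>G) \<le> e + t0 + 3" for i
  proof (induction i)
    case 0
    then show ?case using F0 by (intro exI[of _ "{}"]) simp
  next
    case (Suc i)
    show ?case
    proof (cases "e \<le> card (F i)")
      case True
      then obtain G where "G \<subseteq> F i" "card G = e" "card (\<Union>G) \<le> e + t0 + 3"
        using Suc by auto
      moreover have "F i \<subseteq> F (Suc i)" using mono Suc.prems by simp
      ultimately show ?thesis by (intro exI[of _ G]) auto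
    next
      case False
      have ik: "i < k" using Suc.prems by simp
      have fin: "finite (F (Suc i))" "finite (U (Suc i))" using inv Suc.prems by auto
      have sub: "F i \<subseteq> F (Suc i)" using mono ik by simp
      have "card (F (Suc i) - F i) = card (F (Suc i)) - card (F i)"
        using card_Diff_subset[OF finite_subset[OF sub fin(1)] sub] .
      then have "e - card (F i) \<le> card (F (Suc i) - F i)" using Suc.prems by simp
      then obtain S where S: "S \<subseteq> F (Suc i) - F i" "card S = e - card (F i)" "finite S"
        by (rule obtain_subset_with_card_n)
      define G where "G = F i \<union> S"
      have fFi: "finite (F i)" using finite_subset[OF sub fin(1)] .
      have cG: "card G = e" unfolding G_def
        using card_Un_disjoint[OF fFi S(3)] S False by auto
      have "\<Union>G \<subseteq> U (Suc i)" using S sub inv Suc.prems unfolding G_def by blast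
      then have "card (\<Union>G) \<le> card (U (Suc i))" using fin by (simp add: card_mono)
      also have "\<dots> \<le> card (F (Suc i)) + t0" using inv Suc.prems by blast
      also have "\<dots> \<le> card (F i) + 4 + t0" using grow ik by simp
      finally have "card (\<Union>G) \<le> e + t0 + 3" using False by simp
      moreover have "G \<subseteq> F (Suc i)" using S sub unfolding G_def by blast
      ultimately show ?thesis using cG by blast
    qed
  qed
  show ?thesis using claim[of k] ek by simp
qed

lemma codeg_config:
  assumes h: "\<forall>T\<in>E. card T = 3" and pq: "p \<noteq> q" and ce: "e \<le> card {T\<in>E. {p,q} \<subseteq> T}"
  shows "has_configuration E (e+2) e"
proof -
  obtain F where F: "F \<subseteq> {T\<in>E. {p,q} \<subseteq> T}" "card F = e" "finite F"
    using obtain_subset_with_card_n[OF ce] by blast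
  have "\<Union>F \<subseteq> {p,q} \<union> (\<Union>T\<in>F. T - {p,q})" by blast
  moreover have "finite ({p,q} \<union> (\<Union>T\<in>F. T - {p,q}))"
  proof -
    have "finite T" if "T \<in> F" for T
      using that F(1) h by (intro card_ge_0_finite) auto
    then show ?thesis using F(3) by auto
  qed
  ultimately have "card (\<Union>F) \<le> card ({p,q} \<union> (\<Union>T\<in>F. T - {p,q}))"
    by (intro card_mono)
  also have "\<dots> \<le> card {p,q} + card (\<Union>T\<in>F. T - {p,q})" by (rule card_Un_le)
  also have "card (\<Union>T\<in>F. T - {p,q}) \<le> (\<Sum>T\<in>F. card (T - {p,q}))" using card_UN_le[OF F(3)] .
  also have "(\<Sum>T\<in>F. card (T - {p,q})) = (\<Sum>T\<in>F. 1)"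
  proof (rule sum.cong)
    fix T assume "T \<in> F"
    then have c3: "card T = 3" "{p,q} \<subseteq> T" using F h by auto
    then have "finite T" by (intro card_ge_0_finite) simp
    note c3 = c3 this
    then show "card (T - {p,q}) = 1" using card_Diff_subset[of "{p,q}" T] c3 pq by simp
  qed simp
  finally have "card (\<Union>F) \<le> e + 2" using F(2) pq by simp
  then show ?thesis unfolding has_configuration_def using F by blast
qed

lemma linearize:
  assumes fE: "finite E" and h: "\<forall>T\<in>E. card T = 3"
    and cod: "\<forall>p q. p \<noteq> q \<longrightarrow> card {T\<in>E. {p,q} \<subseteq> T} < e"
  shows "\<exists>E'\<subseteq>E. linear3 E' \<and> card E \<le> 3*e*card E'"
proof -
  define L where "L = {E'. E' \<subseteq> E \<and> linear3 E'}"
  have "finite L" unfolding L_def using fE by simp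
  moreover have "{} \<in> L" unfolding L_def linear3_def by simp
  ultimately obtain m where m: "m \<in> L" "\<forall>b\<in>L. m \<subseteq> b \<longrightarrow> m = b"
    using finite_has_maximal[of L] by blast
  have mE: "m \<subseteq> E" and lm: "linear3 m" using m(1) unfolding L_def by auto
  define N where "N T' = {T\<in>E. 2 \<le> card (T \<inter> T')}" for T'
  have cover: "E \<subseteq> (\<Union>T'\<in>m. N T')"
  proof
    fix T assume TE: "T \<in> E"
    show "T \<in> (\<Union>T'\<in>m. N T')"
    proof (cases "T \<in> m")
      case True
      moreover have "2 \<le> card (T \<inter> T)" using TE h by simp
      ultimately show ?thesis using TE unfolding N_def by blast
    next
      case False
      have "\<not> linear3 (insert T m)"
      proof
        assume "linear3 (insert T m)"
        then have "insert T m \<in> L" using TE mE unfolding L_def by auto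
        then show False using m(2) False by blast
      qed
      then obtain T1 T2 where T12: "T1 \<in> insert T m" "T2 \<in> insert T m" "T1 \<noteq> T2" "\<not> card (T1 \<inter> T2) \<le> 1"
        unfolding linear3_def by blast
      have "\<exists>T'\<in>m. 2 \<le> card (T \<inter> T')"
      proof (cases "T1 = T")
        case True
        then have "T2 \<in> m" using T12 by auto
        then show ?thesis using T12 True by (intro bexI[of _ T2]) auto
      next
        case False
        then have "T1 \<in> m" using T12 by auto
        moreover have "T2 = T" using T12 lm \<open>T1 \<in> m\<close> unfolding linear3_def by blast
        ultimately show ?thesis using T12 by (intro bexI[of _ T1]) (auto simp: Int_commute)
      qed
      then obtain T' where "T' \<in> m" "2 \<le> card (T \<inter> T')" by blast
      then show ?thesis using TE unfolding N_def by blast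
    qed
  qed
  have bound: "card (N T') \<le> 3*e" if "T' \<in> m" for T'
  proof -
    have T'3: "card T' = 3" using that mE h by auto
    then have fT': "finite T'" by (auto intro: card_ge_0_finite)
    define Ps where "Ps = {P. P \<subseteq> T' \<and> card P = 2}"
    have cPs: "card Ps = 3" unfolding Ps_def using n_subsets[OF fT', of 2] T'3 by (simp add: choose_two)
    have fPs: "finite Ps" by (rule card_ge_0_finite) (simp add: cPs)
    have "N T' \<subseteq> (\<Union>P\<in>Ps. {T\<in>E. P \<subseteq> T})"
    proof
      fix T assume "T \<in> N T'"
      then have "T \<in> E" "2 \<le> card (T \<inter> T')" unfolding N_def by auto
      then obtain P where "P \<subseteq> T \<inter> T'" "card P = 2" using obtain_subset_with_card_n by metis
      then show "T \<in> (\<Union>P\<in>Ps. {T\<in>E. P \<subseteq> T})" using \<open>T \<in> E\<close> unfolding Ps_def by blast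
    qed
    then have "card (N T') \<le> card (\<Union>P\<in>Ps. {T\<in>E. P \<subseteq> T})"
      by (intro card_mono) (use fE fPs in auto)
    also have "\<dots> \<le> (\<Sum>P\<in>Ps. card {T\<in>E. P \<subseteq> T})"
      by (rule card_UN_le[OF fPs])
    also have "\<dots> \<le> (\<Sum>P\<in>Ps. e)"
    proof (rule sum_mono)
      fix P assume "P \<in> Ps"
      then obtain p q where "P = {p,q}" "p \<noteq> q" unfolding Ps_def by (auto simp: card_2_iff)
      then show "card {T\<in>E. P \<subseteq> T} \<le> e" using cod by (metis less_imp_le)
    qed
    also have "\<dots> = 3*e" using cPs by simp
    finally show ?thesis .
  qed
  have "card E \<le> card (\<Union>T'\<in>m. N T')"
  proof (rule card_mono[OF _ cover])
    have "finite m" using fE mE finite_subset by blast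
    then show "finite (\<Union>T'\<in>m. N T')" using fE unfolding N_def by auto
  qed
  also have "\<dots> \<le> (\<Sum>T'\<in>m. card (N T'))" by (rule card_UN_le) (use fE mE finite_subset in auto)
  also have "\<dots> \<le> (\<Sum>T'\<in>m. 3*e)" by (rule sum_mono) (use bound in auto)
  also have "\<dots> = 3*e*card m" by simp
  finally show ?thesis using mE lm by blast
qed

definition enc :: "nat \<Rightarrow> nat \<Rightarrow> nat \<Rightarrow> nat" where "enc n a b = a*n + b"
definition lo :: "nat set \<Rightarrow> nat \<Rightarrow> nat" where "lo T x = Min (T - {x})"
definition hi :: "nat set \<Rightarrow> nat \<Rightarrow> nat" where "hi T x = Max (T - {x})"

definition Phi :: "nat \<Rightarrow> nat \<times> (nat set \<times> nat set) \<times> bool \<Rightarrow> nat set" where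
  "Phi n = (\<lambda>(x,(T1,T2),s). {enc n (lo T1 x) (if s then lo T2 x else hi T2 x),
                             enc n (hi T1 x) (if s then hi T2 x else lo T2 x)})"

definition Idx :: "nat \<Rightarrow> nat set set \<Rightarrow> (nat \<times> (nat set \<times> nat set) \<times> bool) set" where
  "Idx n E' = Sigma {..<n} (\<lambda>x. {(T1,T2). T1 \<in> E' \<and> T2 \<in> E' \<and> x \<in> T1 \<and> x \<in> T2 \<and> T1 \<noteq> T2} \<times> UNIV)"

lemma tri_lohi:
  assumes "card T = 3" "x \<in> T"
  shows "lo T x < hi T x \<and> T = {lo T x, hi T x, x} \<and> lo T x \<noteq> x \<and> hi T x \<noteq> x"
proof -
  have fT: "finite T" using assms by (intro card_ge_0_finite) simp
  have "card (T - {x}) = 2" using assms fT by simp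
  then obtain p q where pq: "T - {x} = {p,q}" "p \<noteq> q" by (auto simp: card_2_iff)
  then have "lo T x = min p q" "hi T x = max p q" unfolding lo_def hi_def by auto
  moreover have "T = {p,q,x}" using pq assms by blast
  moreover have "p \<noteq> x" "q \<noteq> x" using pq by blast+
  moreover have "{min p q, max p q} = {p,q}" by (cases "p \<le> q") (auto simp: min_def max_def)
  moreover have "min p q < max p q" using pq(2) by (cases "p \<le> q") (auto simp: min_def max_def)
  moreover have "min p q \<noteq> x" "max p q \<noteq> x" using \<open>p \<noteq> x\<close> \<open>q \<noteq> x\<close> by (auto simp: min_def max_def)
  moreover have "T = {min p q, max p q, x}" using \<open>T = {p,q,x}\<close> \<open>{min p q, max p q} = {p,q}\<close> by blast
  ultimately show ?thesis by simp
qed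

lemma enc_div: "b < n \<Longrightarrow> enc n a b div n = a" by (simp add: enc_def)
lemma enc_mod: "b < n \<Longrightarrow> enc n a b mod n = b" by (simp add: enc_def)
lemma enc_less: "a < n \<Longrightarrow> b < n \<Longrightarrow> enc n a b < n^2"
proof -
  assume "a < n" "b < n"
  then have "a*n + b < a*n + n" by simp
  also have "\<dots> = (a+1)*n" by simp
  also have "\<dots> \<le> n*n" using \<open>a < n\<close> by (intro mult_right_mono) auto
  finally show ?thesis by (simp add: enc_def power2_eq_square)
qed

lemma Phi_shape:
  assumes hyp: "hypergraph3_on {..<n} E'" and i: "(x,(T1,T2),s) \<in> Idx n E'"
  shows "\<exists>a b c d. Phi n (x,(T1,T2),s) = {enc n a b, enc n c d} \<and> a < c \<and> a < n \<and> b < n \<and> c < n \<and> d < n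
     \<and> T1 = {a,c,x} \<and> T2 = {b,d,x} \<and> a = lo T1 x \<and> c = hi T1 x
     \<and> b = (if s then lo T2 x else hi T2 x) \<and> d = (if s then hi T2 x else lo T2 x)"
proof -
  have T: "T1 \<in> E'" "T2 \<in> E'" "x \<in> T1" "x \<in> T2" "x < n" using i unfolding Idx_def by auto
  have c3: "card T1 = 3" "card T2 = 3" "T1 \<subseteq> {..<n}" "T2 \<subseteq> {..<n}"
    using hyp T unfolding hypergraph3_on_def by auto
  note l1 = tri_lohi[OF c3(1) T(3)] and l2 = tri_lohi[OF c3(2) T(4)]
  have "lo T1 x < n" "hi T1 x < n" "lo T2 x < n" "hi T2 x < n" using l1 l2 c3 by blast+
  note bnd = this
  have sw: "{hi T2 x, lo T2 x, x} = {lo T2 x, hi T2 x, x}" by blast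
  show ?thesis
  proof (cases s)
    case True
    then show ?thesis unfolding Phi_def using l1 l2 bnd
      by (intro exI[of _ "lo T1 x"] exI[of _ "lo T2 x"] exI[of _ "hi T1 x"] exI[of _ "hi T2 x"]) simp
  next
    case False
    then show ?thesis unfolding Phi_def using l1 l2 bnd sw
      by (intro exI[of _ "lo T1 x"] exI[of _ "hi T2 x"] exI[of _ "hi T1 x"] exI[of _ "lo T2 x"]) simp
  qed
qed

lemma Phi_graph:
  assumes hyp: "hypergraph3_on {..<n} E'"
  shows "graph_on {..<n^2} (Phi n ` Idx n E')"
  unfolding graph_on_def
proof
  fix \<epsilon> assume "\<epsilon> \<in> Phi n ` Idx n E'"
  then obtain x T1 T2 s where i: "(x,(T1,T2),s) \<in> Idx n E'" "\<epsilon> = Phi n (x,(T1,T2),s)" by auto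
  obtain a b c d where sh: "Phi n (x,(T1,T2),s) = {enc n a b, enc n c d}" "a < c" "a < n" "b < n" "c < n" "d < n"
    using Phi_shape[OF hyp i(1)] by blast
  have "enc n a b \<noteq> enc n c d"
  proof
    assume "enc n a b = enc n c d"
    then have "enc n a b div n = enc n c d div n" by simp
    then show False using sh(2,4,6) enc_div by simp
  qed
  moreover have "enc n a b < n^2" "enc n c d < n^2" using enc_less[OF sh(3) sh(4)] enc_less[OF sh(5) sh(6)] by auto
  moreover have "\<epsilon> = {enc n a b, enc n c d}" using sh(1) i(2) by simp
  ultimately show "\<epsilon> \<subseteq> {..<n^2} \<and> card \<epsilon> = 2" by simp
qed

lemma Phi_edge:
  assumes hyp: "hypergraph3_on {..<n} E'" and lin: "linear3 E'"
    and e: "{w, w'} \<in> Phi n ` Idx n E'"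
  shows "\<exists>x. {w div n, w' div n, x} \<in> E' \<and> {w mod n, w' mod n, x} \<in> E'
            \<and> {w div n, w' div n, x} \<noteq> {w mod n, w' mod n, x}"
proof -
  obtain x T1 T2 s where i: "(x,(T1,T2),s) \<in> Idx n E'" "{w,w'} = Phi n (x,(T1,T2),s)" using e by auto
  have T: "T1 \<in> E'" "T2 \<in> E'" "T1 \<noteq> T2" using i unfolding Idx_def by auto
  obtain a b c d where sh: "Phi n (x,(T1,T2),s) = {enc n a b, enc n c d}" "a < c" "a < n" "b < n" "c < n" "d < n"
     "T1 = {a,c,x}" "T2 = {b,d,x}"
    using Phi_shape[OF hyp i(1)] by blast
  have "(w = enc n a b \<and> w' = enc n c d) \<or> (w = enc n c d \<and> w' = enc n a b)"
  proof -
    have "{w,w'} = {enc n a b, enc n c d}" using i(2) sh(1) by simp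
    then show ?thesis unfolding doubleton_eq_iff by blast
  qed
  then show ?thesis
  proof
    assume "w = enc n a b \<and> w' = enc n c d"
    then have "{w div n, w' div n, x} = T1" "{w mod n, w' mod n, x} = T2"
      using sh enc_div enc_mod by auto
    then show ?thesis using T by (intro exI[of _ x]) auto
  next
    assume "w = enc n c d \<and> w' = enc n a b"
    then have "{w div n, w' div n, x} = T1" "{w mod n, w' mod n, x} = T2"
      using sh enc_div enc_mod by auto
    then show ?thesis using T by (intro exI[of _ x]) auto
  qed
qed

lemma Phi_inj:
  assumes hyp: "hypergraph3_on {..<n} E'" and lin: "linear3 E'"
  shows "inj_on (Phi n) (Idx n E')"
proof (rule inj_onI)
  fix i1 i2 assume i1: "i1 \<in> Idx n E'" and i2: "i2 \<in> Idx n E'" and eq: "Phi n i1 = Phi n i2"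
  obtain x T1 T2 s where i1e: "i1 = (x,(T1,T2),s)" by (cases i1) auto
  obtain x' T1' T2' s' where i2e: "i2 = (x',(T1',T2'),s')" by (cases i2) auto
  have m1: "T1 \<in> E'" "T2 \<in> E'" "x \<in> T1" "x \<in> T2" using i1 i1e unfolding Idx_def by auto
  have m2: "T1' \<in> E'" "T2' \<in> E'" "x' \<in> T1'" "x' \<in> T2'" using i2 i2e unfolding Idx_def by auto
  have c3: "card T1 = 3" "card T2 = 3" "card T1' = 3" "card T2' = 3"
    using hyp m1 m2 unfolding hypergraph3_on_def by auto
  obtain a b c d where sh: "Phi n (x,(T1,T2),s) = {enc n a b, enc n c d}" "a < c" "a < n" "b < n" "c < n" "d < n"
     "T1 = {a,c,x}" "T2 = {b,d,x}" "a = lo T1 x" "c = hi T1 x"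
     "b = (if s then lo T2 x else hi T2 x)"
    using Phi_shape[OF hyp i1[unfolded i1e]] by blast
  obtain a' b' c' d' where sh': "Phi n (x',(T1',T2'),s') = {enc n a' b', enc n c' d'}" "a' < c'" "a' < n" "b' < n" "c' < n" "d' < n"
     "T1' = {a',c',x'}" "T2' = {b',d',x'}" "a' = lo T1' x'" "c' = hi T1' x'"
     "b' = (if s' then lo T2' x' else hi T2' x')"
    using Phi_shape[OF hyp i2[unfolded i2e]] by blast
  have "{enc n a b, enc n c d} = {enc n a' b', enc n c' d'}" using eq sh(1) sh'(1) i1e i2e by simp
  then have "(enc n a b = enc n a' b' \<and> enc n c d = enc n c' d') \<or> (enc n a b = enc n c' d' \<and> enc n c d = enc n a' b')"
    unfolding doubleton_eq_iff by blast
  then have abcd: "a = a' \<and> b = b' \<and> c = c' \<and> d = d'"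
  proof
    assume h: "enc n a b = enc n a' b' \<and> enc n c d = enc n c' d'"
    have "a = a'" using arg_cong[OF conjunct1[OF h], of "\<lambda>z. z div n"] enc_div sh(4) sh'(4) by simp
    moreover have "b = b'" using arg_cong[OF conjunct1[OF h], of "\<lambda>z. z mod n"] enc_mod sh(4) sh'(4) by simp
    moreover have "c = c'" using arg_cong[OF conjunct2[OF h], of "\<lambda>z. z div n"] enc_div sh(6) sh'(6) by simp
    moreover have "d = d'" using arg_cong[OF conjunct2[OF h], of "\<lambda>z. z mod n"] enc_mod sh(6) sh'(6) by simp
    ultimately show ?thesis by simp
  next
    assume h: "enc n a b = enc n c' d' \<and> enc n c d = enc n a' b'"
    have "a = c'" using arg_cong[OF conjunct1[OF h], of "\<lambda>z. z div n"] enc_div sh(4) sh'(6) by simp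
    moreover have "c = a'" using arg_cong[OF conjunct2[OF h], of "\<lambda>z. z div n"] enc_div sh(6) sh'(4) by simp
    ultimately show ?thesis using sh(2) sh'(2) by simp
  qed
  have fT1: "finite T1" using c3 by (intro card_ge_0_finite) simp
  have "a \<noteq> c" using sh(2) by simp
  have TT1: "T1 = T1'"
    using linear3_eq[OF lin m1(1) m2(1) \<open>a \<noteq> c\<close> _ _ _ _ fT1] sh(7) sh'(7) abcd by auto
  have l1': "lo T1' x' \<noteq> x'" "hi T1' x' \<noteq> x'" using tri_lohi[OF c3(3) m2(3)] by auto
  have "x' \<in> {a,c,x}" using m2(3) TT1 sh(7) by simp
  moreover have "x' \<noteq> a" "x' \<noteq> c" using l1' sh'(9,10) abcd by auto
  ultimately have xx: "x = x'" by auto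
  have TT2: "T2 = T2'" using sh(8) sh'(8) abcd xx by simp
  have "lo T2 x \<noteq> hi T2 x" using tri_lohi[OF c3(2) m1(4)] by simp
  then have "s = s'" using sh(11) sh'(11) abcd xx TT2 by (auto split: if_splits)
  then show "i1 = i2" using i1e i2e xx TT1 TT2 by simp
qed

lemma card_Idx:
  assumes hyp: "hypergraph3_on {..<n} E'"
  shows "card (Idx n E') = (\<Sum>x<n. 2 * (card {T\<in>E'. x \<in> T} * (card {T\<in>E'. x \<in> T} - 1)))"
proof -
  have fE: "finite E'"
  proof (rule finite_subset)
    show "E' \<subseteq> Pow {..<n}" using hyp unfolding hypergraph3_on_def by auto
  qed simp
  define S where "S x = {T\<in>E'. x \<in> T}" for x
  have fS: "finite (S x)" for x using fE unfolding S_def by simp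
  have Q: "{(T1,T2). T1 \<in> E' \<and> T2 \<in> E' \<and> x \<in> T1 \<and> x \<in> T2 \<and> T1 \<noteq> T2} = S x \<times> S x - (\<lambda>T. (T,T)) ` S x" for x
    unfolding S_def by auto
  have cQ: "card (S x \<times> S x - (\<lambda>T. (T,T)) ` S x) = card (S x) * (card (S x) - 1)" for x
  proof -
    have "card (S x \<times> S x - (\<lambda>T. (T,T)) ` S x) = card (S x \<times> S x) - card ((\<lambda>T. (T,T)) ` S x)"
      by (rule card_Diff_subset) (use fS in auto)
    also have "card ((\<lambda>T. (T,T)) ` S x) = card (S x)" by (rule card_image) (auto simp: inj_on_def)
    finally show ?thesis by (simp add: card_cartesian_product diff_mult_distrib2)
  qed
  have "card (Idx n E') = (\<Sum>x<n. card ((S x \<times> S x - (\<lambda>T. (T,T)) ` S x) \<times> (UNIV :: bool set)))"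
    unfolding Idx_def Q by (rule card_SigmaI) (use fS in auto)
  also have "\<dots> = (\<Sum>x<n. 2 * (card (S x) * (card (S x) - 1)))"
    by (rule sum.cong) (simp_all add: card_cartesian_product cQ)
  finally show ?thesis unfolding S_def .
qed

lemma sum_bound:
  fixes s :: "nat \<Rightarrow> nat" and \<gamma> :: real
  assumes sm: "(\<Sum>x<n. s x) = 3*m" and mg: "\<gamma> * real n ^ 2 \<le> real m" and gn: "1 \<le> \<gamma> * real n"
    and gp: "0 < \<gamma>"
  shows "\<gamma>^2 * real n ^ 3 \<le> real (\<Sum>x<n. 2 * (s x * (s x - 1)))"
proof -
  define N where "N = real n"
  define M where "M = real m"
  have Np: "N > 0" using gn unfolding N_def by (cases "n = 0") auto
  have t: "real (s x * (s x - 1)) = real (s x)^2 - real (s x)" for x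
    by (cases "s x") (auto simp: power2_eq_square algebra_simps)
  have "real (\<Sum>x<n. 2 * (s x * (s x - 1))) = 2 * (\<Sum>x<n. real (s x)^2) - 2 * (\<Sum>x<n. real (s x))"
  proof -
    have "real (\<Sum>x<n. 2 * (s x * (s x - 1))) = (\<Sum>x<n. 2 * real (s x * (s x - 1)))" by simp
    also have "\<dots> = (\<Sum>x<n. 2 * real (s x)^2 - 2 * real (s x))"
      by (rule sum.cong) (simp_all only: t right_diff_distrib)
    finally show ?thesis by (simp add: sum_subtractf sum_distrib_left)
  qed
  also have "(\<Sum>x<n. real (s x)) = 3 * M" unfolding M_def using arg_cong[OF sm, of real] by simp
  finally have e1: "real (\<Sum>x<n. 2 * (s x * (s x - 1))) = 2 * (\<Sum>x<n. real (s x)^2) - 6 * M" by simp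
  have "(3*M)^2 \<le> (\<Sum>x<n. real (s x)^2) * N"
    using sum_squared_le_sum_of_squares[of "\<lambda>x. real (s x)" "{..<n}"] \<open>(\<Sum>x<n. real (s x)) = 3 * M\<close>
    unfolding N_def by simp
  then have sq: "9 * M^2 / N \<le> (\<Sum>x<n. real (s x)^2)" using Np by (simp add: field_simps power2_eq_square)
  have MN: "M \<ge> \<gamma> * N^2" using mg unfolding M_def N_def by simp
  have gN: "1 \<le> \<gamma> * N" using gn unfolding N_def by simp
  have h1: "3*M - N \<ge> 2*\<gamma>*N^2"
  proof -
    have "3*M - N \<ge> 3*\<gamma>*N^2 - N" using MN by simp
    moreover have "3*\<gamma>*N^2 - N = N * (3*\<gamma>*N - 1)" by (simp add: algebra_simps power2_eq_square)
    moreover have "N * (3*\<gamma>*N - 1) \<ge> N * (2*\<gamma>*N)" using gN Np by (intro mult_left_mono) (auto simp: mult.commute)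
    ultimately show ?thesis by (simp add: algebra_simps power2_eq_square)
  qed
  have "6*M*(3*M - N) \<ge> 6*(\<gamma>*N^2)*(2*\<gamma>*N^2)"
    using MN h1 gp Np by (intro mult_mono) (auto simp: M_def)
  then have key: "18*M^2 - 6*M*N \<ge> 12 * \<gamma>^2 * N^4" by (simp add: algebra_simps power2_eq_square power4_eq_xxxx)
  have "\<gamma>^2 * N^3 \<le> 12 * \<gamma>^2 * N^3" using gp Np by simp
  also have "12 * \<gamma>^2 * N^3 \<le> (18*M^2 - 6*M*N) / N"
  proof -
    have "12 * \<gamma>^2 * N^3 * N = 12 * \<gamma>^2 * N^4"
      by (simp add: power_numeral_reduce power2_eq_square power4_eq_xxxx)
    then have "12 * \<gamma>^2 * N^3 * N \<le> 18*M^2 - 6*M*N" using key by linarith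
    then show ?thesis using Np by (simp add: pos_le_divide_eq)
  qed
  also have "(18*M^2 - 6*M*N) / N = 2 * (9 * M^2 / N) - 6*M"
    using Np by (simp add: diff_divide_distrib power2_eq_square)
  also have "\<dots> \<le> 2 * (\<Sum>x<n. real (s x)^2) - 6 * M" using sq by simp
  finally show ?thesis using e1 unfolding N_def by simp
qed

lemma process_facts:
  fixes \<alpha> \<beta> :: "nat \<Rightarrow> 'a" and lab :: "nat \<Rightarrow> nat \<Rightarrow> 'a" and B :: "nat \<Rightarrow> nat set"
  assumes Bsub: "\<forall>j. B j \<subseteq> {..<j}" and Bc: "\<forall>j<k. card (B j) \<le> 2"
  defines "U \<equiv> \<lambda>i. (\<Union>j<i. {\<alpha> j, \<beta> j} \<union> lab j ` B j)"
    and "F \<equiv> \<lambda>i. (\<Union>j<i. \<Union>l\<in>B j. {{\<alpha> j, \<alpha> l, lab j l}, {\<beta> j, \<beta> l, lab j l}})"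
  shows "finite (U i)" "finite (F i)" "\<Union>(F i) \<subseteq> U i" "F i \<subseteq> F (Suc i)" "F 0 = {}"
    "i < k \<Longrightarrow> card (F (Suc i)) \<le> card (F i) + 4"
proof -
  have finB: "finite (B j)" for j using Bsub finite_subset by blast
  show "finite (U i)" unfolding U_def using finB by auto
  show fF: "finite (F i)" unfolding F_def using finB by auto
  show "\<Union>(F i) \<subseteq> U i"
  proof
    fix v assume "v \<in> \<Union>(F i)"
    then obtain j l where jl: "j < i" "l \<in> B j" "v \<in> {\<alpha> j, \<alpha> l, lab j l} \<or> v \<in> {\<beta> j, \<beta> l, lab j l}"
      unfolding F_def by blast
    have "l < i" using jl Bsub by force
    then show "v \<in> U i" using jl unfolding U_def by blast
  qed
  show "F i \<subseteq> F (Suc i)" unfolding F_def by (rule UN_mono) auto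
  show "F 0 = {}" unfolding F_def by simp
  assume ik: "i < k"
  define X where "X = (\<Union>l\<in>B i. {{\<alpha> i, \<alpha> l, lab i l}, {\<beta> i, \<beta> l, lab i l}})"
  have Fs: "F (Suc i) = F i \<union> X" unfolding F_def X_def by (simp add: lessThan_Suc Un_commute)
  have "card X \<le> (\<Sum>l\<in>B i. card {{\<alpha> i, \<alpha> l, lab i l}, {\<beta> i, \<beta> l, lab i l}})"
    unfolding X_def by (rule card_UN_le[OF finB])
  also have "\<dots> \<le> (\<Sum>l\<in>B i. 2)" by (rule sum_mono) (simp add: card_insert_if)
  also have "\<dots> \<le> 4" using Bc ik by simp
  finally have "card X \<le> 4" .
  then show "card (F (Suc i)) \<le> card (F i) + 4" unfolding Fs using card_Un_le[of "F i" X] by simp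
qed

lemma degree_sum:
  fixes n :: nat and E' :: "nat set set"
  assumes fE: "finite E'" and hyp: "hypergraph3_on {..<n} E'"
  shows "(\<Sum>x<n. card {T\<in>E'. x \<in> T}) = 3 * card E'"
proof -
  have "(\<Sum>x<n. card {T\<in>E'. x \<in> T}) = (\<Sum>x<n. \<Sum>T\<in>E'. if x \<in> T then 1 else 0)"
    by (rule sum.cong) (simp_all add: sum.inter_filter[OF fE, symmetric])
  also have "\<dots> = (\<Sum>T\<in>E'. \<Sum>x<n. if x \<in> T then 1 else 0)" by (rule sum.swap)
  also have "\<dots> = (\<Sum>T\<in>E'. card T)"
  proof (rule sum.cong)
    fix T assume "T \<in> E'"
    then have "T \<subseteq> {..<n}" using hyp unfolding hypergraph3_on_def by auto
    then have e: "{x\<in>{..<n}. x \<in> T} = T" by auto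
    have "(\<Sum>x<n. if x \<in> T then 1 else 0) = (\<Sum>x\<in>{x\<in>{..<n}. x \<in> T}. (1::nat))"
      by (rule sum.inter_filter[symmetric]) simp
    then show "(\<Sum>x<n. if x \<in> T then 1 else 0) = card T" using e by simp
  qed simp
  also have "\<dots> = (\<Sum>T\<in>E'. 3)" by (rule sum.cong) (use hyp in \<open>auto simp: hypergraph3_on_def\<close>)
  finally show ?thesis by simp
qed

lemma back_sum:
  fixes k :: nat
  assumes bij: "bij_betw \<sigma> {..<k} {..<k}" and gr: "graph_on {..<k} H"
  shows "(\<Sum>j<k. card {l. l < j \<and> {\<sigma> j, \<sigma> l} \<in> H}) = card H"
proof -
  define B where "B j = {l. l < j \<and> {\<sigma> j, \<sigma> l} \<in> H}" for j
  have finB: "finite (B j)" for j unfolding B_def by (rule finite_subset[of _ "{..<j}"]) auto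
  have inj: "inj_on \<sigma> {..<k}" using bij bij_betw_def by blast
  have "(\<Sum>j<k. card (B j)) = card (Sigma {..<k} B)" by (rule card_SigmaI[symmetric]) (use finB in auto)
  also have "\<dots> = card ((\<lambda>(j,l). {\<sigma> j, \<sigma> l}) ` Sigma {..<k} B)"
  proof (rule card_image[symmetric], rule inj_onI)
    fix p1 p2 assume p1: "p1 \<in> Sigma {..<k} B" and p2: "p2 \<in> Sigma {..<k} B"
      and eq: "(\<lambda>(j,l). {\<sigma> j, \<sigma> l}) p1 = (\<lambda>(j,l). {\<sigma> j, \<sigma> l}) p2"
    obtain j l where pe1: "p1 = (j,l)" by (cases p1)
    obtain j' l' where pe2: "p2 = (j',l')" by (cases p2)
    have r: "j < k" "l < j" "j' < k" "l' < j'" using p1 p2 pe1 pe2 unfolding B_def by auto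
    have "{\<sigma> j, \<sigma> l} = {\<sigma> j', \<sigma> l'}" using eq pe1 pe2 by simp
    then have "(\<sigma> j = \<sigma> j' \<and> \<sigma> l = \<sigma> l') \<or> (\<sigma> j = \<sigma> l' \<and> \<sigma> l = \<sigma> j')"
      unfolding doubleton_eq_iff by blast
    moreover have "\<sigma> a = \<sigma> b \<Longrightarrow> a < k \<Longrightarrow> b < k \<Longrightarrow> a = b" for a b using inj unfolding inj_on_def by blast
    ultimately have "(j = j' \<and> l = l') \<or> (j = l' \<and> l = j')" using r by (meson order.strict_trans)
    then show "p1 = p2" using pe1 pe2 r by auto
  qed
  also have "(\<lambda>(j,l). {\<sigma> j, \<sigma> l}) ` Sigma {..<k} B = H"
  proof
    show "(\<lambda>(j,l). {\<sigma> j, \<sigma> l}) ` Sigma {..<k} B \<subseteq> H" unfolding B_def by auto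
  next
    show "H \<subseteq> (\<lambda>(j,l). {\<sigma> j, \<sigma> l}) ` Sigma {..<k} B"
    proof
      fix \<epsilon> assume "\<epsilon> \<in> H"
      then have "\<epsilon> \<subseteq> {..<k}" "card \<epsilon> = 2" using gr unfolding graph_on_def by auto
      then obtain p q where pq: "\<epsilon> = {p,q}" "p \<noteq> q" "p < k" "q < k" by (auto simp: card_2_iff)
      have "p \<in> \<sigma> ` {..<k}" using bij pq(3) unfolding bij_betw_def by simp
      then obtain jp where jp: "jp < k" "\<sigma> jp = p" by auto
      have "q \<in> \<sigma> ` {..<k}" using bij pq(4) unfolding bij_betw_def by simp
      then obtain jq where jq: "jq < k" "\<sigma> jq = q" by auto
      have "jp \<noteq> jq" using jp jq pq by auto
      then show "\<epsilon> \<in> (\<lambda>(j,l). {\<sigma> j, \<sigma> l}) ` Sigma {..<k} B"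
      proof (cases "jq < jp")
        case True
        then have "(jp,jq) \<in> Sigma {..<k} B" using jp jq pq \<open>\<epsilon> \<in> H\<close> unfolding B_def by auto
        then show ?thesis using jp jq pq by force
      next
        case False
        then have "jp < jq" using \<open>jp \<noteq> jq\<close> by simp
        then have "(jq,jp) \<in> Sigma {..<k} B" using jp jq pq \<open>\<epsilon> \<in> H\<close> unfolding B_def by (auto simp: insert_commute)
        then show ?thesis using jp jq pq by (force simp: insert_commute)
      qed
    qed
  qed
  finally show ?thesis unfolding B_def .
qed

lemma powr_32: "((real n)^2) powr (3/2) = real n ^ 3"
proof (cases "n = 0")
  case True then show ?thesis by (simp add: power2_eq_square)
next
  case False
  then have p: "real n > 0" by simp
  have eq: "(real n)^2 = real n powr 2" using p by (simp add: powr_numeral)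
  have A: "(real n powr 2) powr (3/2) = real n powr 3" by (subst powr_powr) simp
  then have "((real n)^2) powr (3/2) = real n powr 3" by (simp only: eq)
  also have "\<dots> = real n ^ 3" using p by (simp add: powr_numeral)
  finally show ?thesis .
qed

lemma linear_main:
  fixes E' :: "nat set set" and t :: int and k n e :: nat and \<gamma> :: real
  assumes hyp: "hypergraph3_on {..<n} E'" and lin: "linear3 E'"
    and mg: "\<gamma> * real n ^ 2 \<le> real (card E')" and gn: "1 \<le> \<gamma> * real n" and gp: "0 < \<gamma>"
    and Aprop: "\<forall>EG. graph_on {..<n^2} EG \<and> \<gamma>^2 * real (n^2) powr (3/2) \<le> real (card EG) \<longrightarrow>
                  (\<exists>H\<in>H_family k t. contains_copy {..<k} H {..<n^2} EG)"
    and ke: "(e + nat t)^2 \<le> k" and e1: "1 \<le> e"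
  shows "has_configuration E' (e + nat t + 3) e"
proof -
  have fE: "finite E'"
  proof (rule finite_subset)
    show "E' \<subseteq> Pow {..<n}" using hyp unfolding hypergraph3_on_def by auto
  qed simp
  have card3: "\<forall>T\<in>E'. card T = 3" using hyp unfolding hypergraph3_on_def by auto
  define EG where "EG = Phi n ` Idx n E'"
  have grEG: "graph_on {..<n^2} EG" unfolding EG_def by (rule Phi_graph[OF hyp])
  have "card EG = card (Idx n E')" unfolding EG_def by (rule card_image[OF Phi_inj[OF hyp lin]])
  then have "\<gamma>^2 * real n ^ 3 \<le> real (card EG)"
    using sum_bound[OF degree_sum[OF fE hyp] mg gn gp] card_Idx[OF hyp] by simp
  moreover have "real (n^2) powr (3/2) = real n ^ 3" using powr_32[of n] by simp
  ultimately have "\<gamma>^2 * real (n^2) powr (3/2) \<le> real (card EG)" by simp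
  then obtain H where H: "H \<in> H_family k t" and cc: "contains_copy {..<k} H {..<n^2} EG"
    using Aprop grEG by blast
  obtain f where f: "inj_on f {..<k}" "f ` {..<k} \<subseteq> {..<n^2}" "\<forall>\<epsilon>\<in>H. f ` \<epsilon> \<in> EG"
    using cc unfolding contains_copy_def by blast
  have grH: "graph_on {..<k} H" and td: "two_degenerate {..<k} H" and cH: "int (card H) = 2 * int k - t"
    using H unfolding H_family_def by auto
  obtain \<sigma> where \<sigma>: "bij_betw \<sigma> {..<k} {..<k}"
    and deg: "\<forall>i<k. card {j. j < i \<and> {\<sigma> i, \<sigma> j} \<in> H} \<le> 2"
    using td unfolding two_degenerate_def by auto
  have injs: "\<sigma> a = \<sigma> b \<Longrightarrow> a < k \<Longrightarrow> b < k \<Longrightarrow> a = b" for a b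
    using \<sigma> unfolding bij_betw_def inj_on_def by blast
  have sk: "a < k \<Longrightarrow> \<sigma> a < k" for a using \<sigma> unfolding bij_betw_def by auto
  define w where "w j = f (\<sigma> j)" for j
  define \<alpha> where "\<alpha> j = w j div n" for j
  define \<beta> where "\<beta> j = w j mod n" for j
  define B where "B j = {l. l < j \<and> {\<sigma> j, \<sigma> l} \<in> H}" for j
  define Q where "Q j l x \<longleftrightarrow> {\<alpha> j, \<alpha> l, x} \<in> E' \<and> {\<beta> j, \<beta> l, x} \<in> E' \<and> {\<alpha> j, \<alpha> l, x} \<noteq> {\<beta> j, \<beta> l, x}" for j l x
  define lab where "lab j l = (SOME x. Q j l x)" for j l
  have Bsub: "\<forall>j. B j \<subseteq> {..<j}" unfolding B_def by auto
  have Bc: "\<forall>j<k. card (B j) \<le> 2" using deg unfolding B_def by simp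
  have P: "\<forall>j<k. \<forall>l\<in>B j. {\<alpha> j, \<alpha> l, lab j l} \<in> E' \<and> {\<beta> j, \<beta> l, lab j l} \<in> E'
               \<and> {\<alpha> j, \<alpha> l, lab j l} \<noteq> {\<beta> j, \<beta> l, lab j l}"
  proof (intro allI impI ballI)
    fix j l assume j: "j < k" and l: "l \<in> B j"
    then have "{\<sigma> j, \<sigma> l} \<in> H" unfolding B_def by simp
    then have "f ` {\<sigma> j, \<sigma> l} \<in> EG" using f(3) by blast
    then have "{w j, w l} \<in> Phi n ` Idx n E'" unfolding EG_def w_def by simp
    then have "\<exists>x. Q j l x" using Phi_edge[OF hyp lin] unfolding Q_def \<alpha>_def \<beta>_def by blast
    then have "Q j l (lab j l)" unfolding lab_def by (rule someI_ex)
    then show "{\<alpha> j, \<alpha> l, lab j l} \<in> E' \<and> {\<beta> j, \<beta> l, lab j l} \<in> E'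
               \<and> {\<alpha> j, \<alpha> l, lab j l} \<noteq> {\<beta> j, \<beta> l, lab j l}" unfolding Q_def .
  qed
  have injc: "\<forall>j<k. \<forall>l<k. \<alpha> j = \<alpha> l \<and> \<beta> j = \<beta> l \<longrightarrow> j = l"
  proof (intro allI impI)
    fix j l assume jl: "j < k" "l < k" "\<alpha> j = \<alpha> l \<and> \<beta> j = \<beta> l"
    have "w j = \<alpha> j * n + \<beta> j" unfolding \<alpha>_def \<beta>_def by simp
    also have "\<dots> = \<alpha> l * n + \<beta> l" using jl by simp
    also have "\<dots> = w l" unfolding \<alpha>_def \<beta>_def by simp
    finally have "f (\<sigma> j) = f (\<sigma> l)" unfolding w_def .
    then have "\<sigma> j = \<sigma> l" using f(1) sk jl unfolding inj_on_def by blast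
    then show "j = l" using injs jl by blast
  qed
  define U where "U = (\<lambda>i. (\<Union>j<i. {\<alpha> j, \<beta> j} \<union> lab j ` B j))"
  define F where "F = (\<lambda>i. (\<Union>j<i. \<Union>l\<in>B j. {{\<alpha> j, \<alpha> l, lab j l}, {\<beta> j, \<beta> l, lab j l}}))"
  have proc: "i \<le> k \<Longrightarrow> card (U i) + (\<Sum>j<i. card (B j)) \<le> card (F i) + 2*i" for i
    unfolding U_def F_def by (rule process[OF lin card3 Bsub Bc P injc])
  have pf1: "finite (U i)" for i unfolding U_def by (rule process_facts(1)[OF Bsub Bc])
  have pf2: "finite (F i)" for i unfolding F_def by (rule process_facts(2)[OF Bsub Bc])
  have pf3: "\<Union>(F i) \<subseteq> U i" for i unfolding U_def F_def by (rule process_facts(3)[OF Bsub Bc])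
  have pf4: "F i \<subseteq> F (Suc i)" for i unfolding F_def by (rule process_facts(4)[OF Bsub Bc])
  have pf5: "F 0 = {}" unfolding F_def by simp
  have pf6: "i < k \<Longrightarrow> card (F (Suc i)) \<le> card (F i) + 4" for i
    unfolding F_def by (rule process_facts(6)[OF Bsub Bc])
  note pf = pf1 pf2 pf3 pf4 pf5 pf6
  have sumB: "(\<Sum>j<k. card (B j)) = card H" unfolding B_def by (rule back_sum[OF \<sigma> grH])
  define \<delta> where "\<delta> j = 2 - int (card (B j))" for j
  have \<delta>nn: "j < k \<Longrightarrow> 0 \<le> \<delta> j" for j using Bc unfolding \<delta>_def by auto
  have \<delta>sum: "(\<Sum>j<i. \<delta> j) = 2 * int i - int (\<Sum>j<i. card (B j))" for i
    unfolding \<delta>_def by (simp add: sum_subtractf)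
  have tdef: "t = (\<Sum>j<k. \<delta> j)" using \<delta>sum[of k] sumB cH by simp
  have tnn: "0 \<le> t" unfolding tdef using \<delta>nn by (intro sum_nonneg) auto
  have inv: "\<forall>i\<le>k. finite (U i) \<and> finite (F i) \<and> \<Union>(F i) \<subseteq> U i \<and> card (U i) \<le> card (F i) + nat t"
  proof (intro allI impI conjI)
    fix i assume ik: "i \<le> k"
    show "finite (U i)" "finite (F i)" "\<Union>(F i) \<subseteq> U i" using pf by auto
    have "(\<Sum>j<i. \<delta> j) \<le> (\<Sum>j<k. \<delta> j)"
      by (rule sum_mono2) (use ik \<delta>nn in auto)
    then have "int (card (U i)) \<le> int (card (F i)) + t"
      using proc[OF ik] \<delta>sum[of i] tdef by linarith
    then show "card (U i) \<le> card (F i) + nat t" using tnn by linarith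
  qed
  define C where "C = \<alpha> ` {..<k} \<union> \<beta> ` {..<k}"
  have fC: "finite C" unfolding C_def by simp
  have "k = card {..<k}" by simp
  also have "\<dots> = card ((\<lambda>j. (\<alpha> j, \<beta> j)) ` {..<k})"
    by (rule card_image[symmetric]) (use injc in \<open>auto simp: inj_on_def\<close>)
  also have "\<dots> \<le> card (C \<times> C)" by (rule card_mono) (use fC in \<open>auto simp: C_def\<close>)
  finally have kC: "k \<le> card C * card C" by (simp add: card_cartesian_product)
  have "e + nat t \<le> card C"
  proof (rule ccontr)
    assume "\<not> e + nat t \<le> card C"
    then have "card C < e + nat t" by simp
    then have "card C * card C < (e + nat t) * (e + nat t)" by (intro mult_strict_mono) auto
    then show False using kC ke by (simp add: power2_eq_square)
  qed
  moreover have "C \<subseteq> U k" unfolding C_def U_def by auto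
  then have "card C \<le> card (U k)" using pf by (simp add: card_mono)
  moreover have "card (U k) \<le> card (F k) + nat t" using inv by simp
  ultimately have ek: "e \<le> card (F k)" by simp
  obtain G where G: "G \<subseteq> F k" "card G = e" "card (\<Union>G) \<le> e + nat t + 3"
    using extract_cfg[of F k U "nat t" e] pf inv ek by auto
  have "F k \<subseteq> E'" unfolding F_def using P Bsub by force
  then show ?thesis unfolding has_configuration_def using G by blast
qed

lemma config_mono:
  assumes "has_configuration E v e" "E \<subseteq> E2" "v \<le> v2"
  shows "has_configuration E2 v2 e"
proof -
  obtain F where F: "F \<subseteq> E" "card F = e" "card (\<Union>F) \<le> v"
    using assms(1) unfolding has_configuration_def by blast
  then have "F \<subseteq> E2" "card (\<Union>F) \<le> v2" using assms(2,3) by auto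
  then show ?thesis unfolding has_configuration_def using F(2) by blast
qed

theorem theorem1p4:
  assumes "statement_A"
  shows "statement_B"
proof -
  obtain t :: int and k0 :: nat where A: "\<forall>k\<ge>k0. \<forall>c::real>0. \<exists>n0::nat. \<forall>n\<ge>n0.
       \<forall>E::nat set set. graph_on {..<n} E \<and> real (card E) \<ge> c * real n powr (3/2) \<longrightarrow>
         (\<exists>H\<in>H_family k t. contains_copy {..<k} H {..<n} E)"
    using assms unfolding statement_A_def by blast
  show ?thesis unfolding statement_B_def
  proof (rule exI[of _ "nat t + 3"], intro allI impI)
    fix e :: nat and c :: real
    assume e3: "e \<ge> 3" and cp: "c > 0"
    define k where "k = max k0 ((e + nat t)^2)"
    define \<gamma> where "\<gamma> = c / (3 * real e)"
    have gp: "\<gamma> > 0" unfolding \<gamma>_def using cp e3 by simp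
    have "\<exists>n0::nat. \<forall>n\<ge>n0. \<forall>E::nat set set. graph_on {..<n} E \<and> real (card E) \<ge> \<gamma>^2 * real n powr (3/2) \<longrightarrow>
         (\<exists>H\<in>H_family k t. contains_copy {..<k} H {..<n} E)"
    proof -
      have kk: "k0 \<le> k" unfolding k_def by simp
      have g2: "0 < \<gamma>^2" using gp by simp
      show ?thesis by (rule mp[OF spec[OF mp[OF spec[OF A, of k] kk], of "\<gamma>^2"] g2])
    qed
    then obtain n1 :: nat where n1: "\<forall>n\<ge>n1. \<forall>E::nat set set. graph_on {..<n} E \<and> real (card E) \<ge> \<gamma>^2 * real n powr (3/2) \<longrightarrow>
         (\<exists>H\<in>H_family k t. contains_copy {..<k} H {..<n} E)" by blast
    show "\<exists>n0::nat. \<forall>n\<ge>n0. \<forall>E::nat set set. hypergraph3_on {..<n} E \<and> c * (real n)\<^sup>2 \<le> real (card E) \<longrightarrow>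
              has_configuration E (e + (nat t + 3)) e"
    proof (intro exI[of _ "max n1 (nat \<lceil>1/\<gamma>\<rceil>)"] allI impI)
      fix n :: nat and E :: "nat set set"
      assume nn: "max n1 (nat \<lceil>1/\<gamma>\<rceil>) \<le> n"
        and hE: "hypergraph3_on {..<n} E \<and> c * (real n)\<^sup>2 \<le> real (card E)"
      have hyp: "hypergraph3_on {..<n} E" and cE: "c * (real n)\<^sup>2 \<le> real (card E)" using hE by auto
      have "1/\<gamma> \<le> real (nat \<lceil>1/\<gamma>\<rceil>)" by linarith
      also have "\<dots> \<le> real n" using nn by simp
      finally have gn: "1 \<le> \<gamma> * real n" using gp by (simp add: field_simps)
      then have n1p: "1 \<le> n" using gp by (cases "n = 0") auto
      have "n1 \<le> n" using nn by simp
      also have "n \<le> n^2" using n1p by (simp add: power2_eq_square)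
      finally have nsq: "n1 \<le> n^2" .
      have Ap: "\<forall>EG. graph_on {..<n^2} EG \<and> \<gamma>^2 * real (n^2) powr (3/2) \<le> real (card EG) \<longrightarrow>
                  (\<exists>H\<in>H_family k t. contains_copy {..<k} H {..<n^2} EG)"
        by (rule mp[OF spec[OF n1, of "n^2"] nsq])
      have fE: "finite E"
      proof (rule finite_subset)
        show "E \<subseteq> Pow {..<n}" using hyp unfolding hypergraph3_on_def by auto
      qed simp
      have card3: "\<forall>T\<in>E. card T = 3" using hyp unfolding hypergraph3_on_def by auto
      show "has_configuration E (e + (nat t + 3)) e"
      proof (cases "\<exists>p q. p \<noteq> q \<and> e \<le> card {T\<in>E. {p,q} \<subseteq> T}")
        case True
        then obtain p q where "p \<noteq> q" "e \<le> card {T\<in>E. {p,q} \<subseteq> T}" by blast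
        then have "has_configuration E (e+2) e" by (rule codeg_config[OF card3])
        then show ?thesis by (rule config_mono) auto
      next
        case False
        then have cod: "\<forall>p q. p \<noteq> q \<longrightarrow> card {T\<in>E. {p,q} \<subseteq> T} < e" by (meson not_le)
        obtain E' where E': "E' \<subseteq> E" "linear3 E'" "card E \<le> 3*e*card E'"
          using linearize[OF fE card3 cod] by blast
        have hyp': "hypergraph3_on {..<n} E'" using hyp E'(1) unfolding hypergraph3_on_def by auto
        have "real (card E) \<le> real (3*e*card E')" using E'(3) by (simp only: of_nat_le_iff)
        then have "c * (real n)^2 \<le> real (card E') * (3 * real e)" using cE by (simp add: mult.commute)
        moreover have "3 * real e > 0" using e3 by simp
        ultimately have "c * (real n)^2 / (3 * real e) \<le> real (card E')" by (simp only: pos_divide_le_eq)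
        moreover have "\<gamma> * real n ^ 2 = c * (real n)^2 / (3 * real e)" unfolding \<gamma>_def by simp
        ultimately have mg: "\<gamma> * real n ^ 2 \<le> real (card E')" by simp
        have ke: "(e + nat t)^2 \<le> k" unfolding k_def by simp
        have "has_configuration E' (e + nat t + 3) e"
          by (rule linear_main[OF hyp' E'(2) mg gn gp Ap ke]) (use e3 in simp)
        then show ?thesis by (rule config_mono) (use E' in auto)
      qed
    qed
  qed
qed

end
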